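(* Let $\mathcal{A}$ be a complete deterministic one-clock timed automaton over the alphabet $\Sigma$, and let $\textsf{MQ}$ be the membership function of $L(\mathcal{A})$, i.e. $\textsf{MQ}(\omega)=+$ if $\omega\in L(\mathcal{A})$ and $\textsf{MQ}(\omega)=-$ otherwise. Let $\omega_1,\omega_2$ be timed words, $e$ a timed word (the suffix), and $i_1,i_2$ natural numbers such that $i_1=k_{\mathcal{A}}(\omega_1)$ and $i_2=k_{\mathcal{A}}(\omega_2)$. If the test $T(\omega_1,\omega_2,i_1,i_2,e)=\bot$, then the runs of $\mathcal{A}$ on $\omega_1$ and on $\omega_2$ end in different locations of $\mathcal{A}$.
   Context: A one-clock timed automaton (OTA) is a tuple $\mathcal{A}=(\Sigma,Q,q_0,F,c,\Delta)$ with finite alphabet $\Sigma$, finite location set $Q$, initial location $q_0$, accepting locations $F\subseteq Q$, a single clock $c$, and finite transition set $\Delta\subseteq Q\times\Sigma\times\Phi_c\times\{\top,\bot\}\times Q$, where a guard in $\Phi_c$ is an interval of $\mathbb{R}_{\ge 0}$ with endpoints in $\mathbb{N}\cup\{\infty\}$. A timed word is $\omega=(\sigma_1,t_1)\cdots(\sigma_n,t_n)$ with $\sigma_i\in\Sigma$, $t_i\in\mathbb{R}_{\ge0}$ ($t_i$ is the delay before $\sigma_i$); $|\omega|=n$. A run on $\omega$ is $(q_0,\nu_0)\to(q_1,\nu_1)\to\cdots\to(q_n,\nu_n)$ with $\nu_0=0$, where for each $i$ there is a transition $(q_{i-1},\sigma_i,\phi_i,b_i,q_i)\in\Delta$ with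 $\nu_{i-1}+t_i\in\phi_i$, and $\nu_i=0$ if $b_i=\top$, $\nu_i=\nu_{i-1}+t_i$ otherwise; $\omega$ is accepted if $q_n\in F$. The OTA is deterministic (DOTA) if guards of transitions from the same location with the same action are pairwise disjoint, and complete if for each location and action these guards partition $\mathbb{R}_{\ge0}$ (so each timed word has exactly one run). The last reset $k_{\mathcal{A}}(\omega)$ is $0$ if $b_i=\bot$ for all $i$ in the run of $\omega$, and otherwise the largest $i$ with $b_i=\top$. For a timed word $\omega$ of length $n$ and $0\le i\le n$, let $\nu_c(\omega,i)=\sum_{j=i+1}^{n}t_j$ (equal to $0$ if $i=n$). The test $T(\omega_1,\omega_2,i_1,i_2,e)$ is defined as follows. If $e$ is empty, $T=\top$ iff $\textsf{MQ}(\omega_1)=\textsf{MQ}(\omega_2)$. If $e=(\sigma_1,t_1)(\sigma_2,t_2)\cdots(\sigma_m,t_m)$ is nonempty, let $\nu_1=\nu_c(\omega_1,i_1)$, $\nu_2=\nu_c(\omega_2,i_2)$; if $\nu_1>\nu_2$ put $e_1=e$ and $e_2=(\sigma_1,t_1+(\nu_1-\nu_2))(\sigma_2,t_2)\cdots(\sigma_m,t_m)$; if $\nu_1<\nu_2$ put $e_1=(\sigma_1,t_1+(\nu_2-\nu_1))(\sigma_2,t_2)\cdots(\sigma_m,t_m)$ and $e_2=e$; if $\nu_1=\nu_2$ put $e_1=e_2=e$. Then $T=\top$ iff $\textsf{MQ}(\omega_1\cdot e_1)=\textsf{MQ}(\omega_2\cdot e_2)$, and $T=\bot$ otherwise. 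*)

theory Defs
  imports Complex_Main
begin

text \<open>Guard lo lo_closed hi hi_closed: lower endpoint lo (closed iff lo_closed),
  upper endpoint hi (None = \<infinity>, always open then; Some h closed iff hi_closed).\<close>
datatype guard = Guard nat bool "nat option" bool

fun in_guard :: "real \<Rightarrow> guard \<Rightarrow> bool" where
  "in_guard x (Guard lo lc hi hc) =
     ((if lc then real lo \<le> x else real lo < x) \<and>
      (case hi of None \<Rightarrow> True | Some h \<Rightarrow> (if hc then x \<le> real h else x < real h)))"

text \<open>A transition (q, \<sigma>, \<phi>, b, q'); b = True means the clock is reset.\<close>
type_synonym ('s, 'q) transition = "'q \<times> 's \<times> guard \<times> bool \<times> 'q"

record ('s, 'q) ota =
  alph  :: "'s set"
  locs  :: "'q set"
  init  :: "'q"
  final :: "'q set"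
  trans :: "('s, 'q) transition set"

type_synonym 's timed_word = "('s \<times> real) list"

definition wf_ota :: "('s, 'q) ota \<Rightarrow> bool" where
  "wf_ota A \<longleftrightarrow> finite (alph A) \<and> finite (locs A) \<and> init A \<in> locs A \<and>
     final A \<subseteq> locs A \<and> finite (trans A) \<and>
     (\<forall>(q, \<sigma>, \<phi>, b, q') \<in> trans A. q \<in> locs A \<and> \<sigma> \<in> alph A \<and> q' \<in> locs A)"

definition deterministic :: "('s, 'q) ota \<Rightarrow> bool" where
  "deterministic A \<longleftrightarrow>
     (\<forall>tr1 \<in> trans A. \<forall>tr2 \<in> trans A.
        case (tr1, tr2) of ((q1, \<sigma>1, \<phi>1, b1, p1), (q2, \<sigma>2, \<phi>2, b2, p2)) \<Rightarrow>
          (q1 = q2 \<and> \<sigma>1 = \<sigma>2 \<and> tr1 \<noteq> tr2) \<longrightarrow> (\<forall>x. \<not> (in_guard x \<phi>1 \<and> in_guard x \<phi>2)))"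

definition complete :: "('s, 'q) ota \<Rightarrow> bool" where
  "complete A \<longleftrightarrow>
     (\<forall>q \<in> locs A. \<forall>\<sigma> \<in> alph A. \<forall>x::real. x \<ge> 0 \<longrightarrow>
        (\<exists>\<phi> b q'. (q, \<sigma>, \<phi>, b, q') \<in> trans A \<and> in_guard x \<phi>))"

definition complete_DOTA :: "('s, 'q) ota \<Rightarrow> bool" where
  "complete_DOTA A \<longleftrightarrow> wf_ota A \<and> deterministic A \<and> complete A"

definition is_timed_word :: "('s, 'q) ota \<Rightarrow> 's timed_word \<Rightarrow> bool" where
  "is_timed_word A w \<longleftrightarrow> (\<forall>(\<sigma>, t) \<in> set w. \<sigma> \<in> alph A \<and> t \<ge> 0)"

text \<open>run A w q \<nu> k: there is a run of A on w ending in configuration (q, \<nu>)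
  whose last reset index is k (0 if no reset occurred).\<close>
inductive run :: "('s, 'q) ota \<Rightarrow> 's timed_word \<Rightarrow> 'q \<Rightarrow> real \<Rightarrow> nat \<Rightarrow> bool"
  for A where
  run_Nil: "run A [] (init A) 0 0"
| run_snoc: "\<lbrakk> run A w q \<nu> k; (q, \<sigma>, \<phi>, b, q') \<in> trans A; in_guard (\<nu> + t) \<phi> \<rbrakk>
     \<Longrightarrow> run A (w @ [(\<sigma>, t)]) q' (if b then 0 else \<nu> + t) (if b then length w + 1 else k)"

definition MQ :: "('s, 'q) ota \<Rightarrow> 's timed_word \<Rightarrow> bool" where
  "MQ A w \<longleftrightarrow> (\<exists>q \<nu> k. run A w q \<nu> k \<and> q \<in> final A)"

definition nu_c :: "'s timed_word \<Rightarrow> nat \<Rightarrow> real" where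
  "nu_c w i = (\<Sum>j = i+1..length w. snd (w ! (j - 1)))"

fun shift_first :: "real \<Rightarrow> 's timed_word \<Rightarrow> 's timed_word" where
  "shift_first d [] = []"
| "shift_first d ((\<sigma>, t) # e) = (\<sigma>, t + d) # e"

definition test :: "('s, 'q) ota \<Rightarrow> 's timed_word \<Rightarrow> 's timed_word \<Rightarrow> nat \<Rightarrow> nat \<Rightarrow> 's timed_word \<Rightarrow> bool" where
  "test A w1 w2 i1 i2 e =
    (if e = [] then MQ A w1 = MQ A w2
     else (let v1 = nu_c w1 i1; v2 = nu_c w2 i2;
               e1 = (if v1 < v2 then shift_first (v2 - v1) e else e);
               e2 = (if v1 > v2 then shift_first (v1 - v2) e else e)
           in MQ A (w1 @ e1) = MQ A (w2 @ e2)))"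

end

theory Submission
  imports Defs
begin

lemma run_snoc_inv:
  assumes "run A (w @ [(\<sigma>, t)]) q' \<nu> k"
  shows "\<exists>q0 \<nu>0 k0 \<phi> bb. run A w q0 \<nu>0 k0 \<and> (q0, \<sigma>, \<phi>, bb, q') \<in> trans A \<and> in_guard (\<nu>0 + t) \<phi>
     \<and> \<nu> = (if bb then 0 else \<nu>0 + t) \<and> k = (if bb then length w + 1 else k0)"
  using assms
proof (cases rule: run.cases)
  case run_Nil
  then show ?thesis by simp
next
  case (run_snoc w' q \<nu>' k' \<sigma>' \<phi> b t')
  then show ?thesis by (intro exI[of _ q] exI[of _ \<nu>'] exI[of _ k'] exI[of _ \<phi>] exI[of _ b]) auto
qed

lemma run_unique:
  assumes det: "deterministic A"
  shows "run A w q \<nu> k \<Longrightarrow> run A w q' \<nu>' k' \<Longrightarrow> q = q' \<and> \<nu> = \<nu>' \<and> k = k'"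
proof (induction arbitrary: q' \<nu>' k' rule: run.induct)
  case run_Nil
  then show ?case by (cases rule: run.cases) auto
next
  case (run_snoc w q \<nu> k \<sigma> \<phi> b q2 t)
  from run_snoc_inv[OF run_snoc.prems] obtain q0 \<nu>0 k0 \<phi>' bb where
    r: "run A w q0 \<nu>0 k0" and tr: "(q0, \<sigma>, \<phi>', bb, q') \<in> trans A" and g: "in_guard (\<nu>0 + t) \<phi>'"
    and e: "\<nu>' = (if bb then 0 else \<nu>0 + t)" "k' = (if bb then length w + 1 else k0)"
    by blast
  from run_snoc.IH[OF r] have h: "q = q0" "\<nu> = \<nu>0" "k = k0" by auto
  have "(q, \<sigma>, \<phi>, b, q2) = (q0, \<sigma>, \<phi>', bb, q')"
  proof (rule ccontr)
    assume "(q, \<sigma>, \<phi>, b, q2) \<noteq> (q0, \<sigma>, \<phi>', bb, q')"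
    with det run_snoc.hyps(2) tr h have "\<forall>x. \<not> (in_guard x \<phi> \<and> in_guard x \<phi>')"
      unfolding deterministic_def by fastforce
    with run_snoc.hyps(3) g h show False by auto
  qed
  then show ?case using h e by auto
qed

lemma run_k_le: "run A w q \<nu> k \<Longrightarrow> k \<le> length w"
  by (induction rule: run.induct) auto

lemma run_nu: "run A w q \<nu> k \<Longrightarrow> \<nu> = nu_c w k"
proof (induction rule: run.induct)
  case run_Nil
  then show ?case by (simp add: nu_c_def)
next
  case (run_snoc w q \<nu> k \<sigma> \<phi> b q' t)
  show ?case
  proof (cases b)
    case True
    then show ?thesis by (simp add: nu_c_def)
  next
    case False
    have kle: "k \<le> length w" using run_k_le[OF run_snoc.hyps(1)] .
    have "nu_c (w @ [(\<sigma>, t)]) k = (\<Sum>j = k+1..length w + 1. snd ((w @ [(\<sigma>, t)]) ! (j - 1)))"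
      by (simp add: nu_c_def)
    also have "\<dots> = (\<Sum>j = k+1..length w. snd ((w @ [(\<sigma>, t)]) ! (j - 1))) + t"
      using kle by (simp add: nth_append)
    also have "(\<Sum>j = k+1..length w. snd ((w @ [(\<sigma>, t)]) ! (j - 1))) = nu_c w k"
      unfolding nu_c_def by (rule sum.cong) (auto simp: nth_append)
    finally show ?thesis using False run_snoc.IH by simp
  qed
qed

lemma shift_first_snoc: "u \<noteq> [] \<Longrightarrow> shift_first d (u @ [x]) = shift_first d u @ [x]"
  by (cases u) (auto split: prod.splits)

lemma shift_first_0: "shift_first 0 u = u"
  by (cases u) auto

lemma sim:
  assumes det: "deterministic A" and r1: "run A w1 q a k1" and r2: "run A w2 q b k2"
    and d: "a + d1 = b + d2"
  shows "u \<noteq> [] \<Longrightarrow> run A (w1 @ shift_first d1 u) q' \<nu> k \<Longrightarrow> \<exists>k'. run A (w2 @ shift_first d2 u) q' \<nu> k'"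
proof (induction u arbitrary: q' \<nu> k rule: rev_induct)
  case Nil
  then show ?case by simp
next
  case (snoc x u)
  obtain \<sigma> t where x: "x = (\<sigma>, t)" by (cases x)
  show ?case
  proof (cases "u = []")
    case True
    with snoc.prems x have "run A (w1 @ [(\<sigma>, t + d1)]) q' \<nu> k" by simp
    from run_snoc_inv[OF this] obtain q0 \<nu>0 k0 \<phi> bb where
      r: "run A w1 q0 \<nu>0 k0" and tr: "(q0, \<sigma>, \<phi>, bb, q') \<in> trans A" and g: "in_guard (\<nu>0 + (t + d1)) \<phi>"
      and e: "\<nu> = (if bb then 0 else \<nu>0 + (t + d1))"
      by blast
    from run_unique[OF det r r1] have h: "q0 = q" "\<nu>0 = a" by auto
    have g2: "in_guard (b + (t + d2)) \<phi>" proof -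
      have "b + (t + d2) = \<nu>0 + (t + d1)" using h d by simp
      then show ?thesis using g by metis
    qed
    have "run A (w2 @ [(\<sigma>, t + d2)]) q' (if bb then 0 else b + (t + d2)) (if bb then length w2 + 1 else k2)"
      using run.run_snoc[OF r2 _ g2] tr h by simp
    moreover have "(if bb then 0 else b + (t + d2)) = \<nu>" using e h d by (simp add: algebra_simps)
    ultimately show ?thesis using True x by auto
  next
    case False
    with snoc.prems x have "run A ((w1 @ shift_first d1 u) @ [(\<sigma>, t)]) q' \<nu> k"
      by (simp add: shift_first_snoc)
    from run_snoc_inv[OF this] obtain q0 \<nu>0 k0 \<phi> bb where
      r: "run A (w1 @ shift_first d1 u) q0 \<nu>0 k0" and tr: "(q0, \<sigma>, \<phi>, bb, q') \<in> trans A"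
      and g: "in_guard (\<nu>0 + t) \<phi>" and e: "\<nu> = (if bb then 0 else \<nu>0 + t)"
      by blast
    from snoc.IH[OF False r] obtain k' where "run A (w2 @ shift_first d2 u) q0 \<nu>0 k'" by blast
    from run.run_snoc[OF this tr g] have
      "run A ((w2 @ shift_first d2 u) @ [(\<sigma>, t)]) q' \<nu> (if bb then length (w2 @ shift_first d2 u) + 1 else k')"
      using e by simp
    then show ?thesis using False x by (auto simp: shift_first_snoc)
  qed
qed

lemma MQ_sim:
  assumes det: "deterministic A" and r1: "run A w1 q a k1" and r2: "run A w2 q b k2"
    and d: "a + d1 = b + d2" and u: "u \<noteq> []"
  shows "MQ A (w1 @ shift_first d1 u) = MQ A (w2 @ shift_first d2 u)"
proof
  assume "MQ A (w1 @ shift_first d1 u)"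
  then show "MQ A (w2 @ shift_first d2 u)"
    unfolding MQ_def using sim[OF det r1 r2 d u] by blast
next
  assume "MQ A (w2 @ shift_first d2 u)"
  moreover have "b + d2 = a + d1" using d by simp
  ultimately show "MQ A (w1 @ shift_first d1 u)"
    unfolding MQ_def using sim[OF det r2 r1 _ u] by blast
qed

theorem lemma1:
  fixes A :: "('s, 'q) ota" and w1 w2 e :: "'s timed_word" and i1 i2 :: nat
    and q1 q2 :: 'q and v1 v2 :: real
  assumes "complete_DOTA A"
    and "is_timed_word A w1" and "is_timed_word A w2" and "is_timed_word A e"
    and "run A w1 q1 v1 i1" and "run A w2 q2 v2 i2"
    and "\<not> test A w1 w2 i1 i2 e"
  shows "q1 \<noteq> q2"
proof
  assume eq: "q1 = q2"
  have det: "deterministic A" using assms(1) by (simp add: complete_DOTA_def)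
  have r1: "run A w1 q1 v1 i1" and r2: "run A w2 q1 v2 i2" using assms(5,6) eq by auto
  have n1: "nu_c w1 i1 = v1" using run_nu[OF r1] by simp
  have n2: "nu_c w2 i2 = v2" using run_nu[OF r2] by simp
  show False
  proof (cases "e = []")
    case True
    have "MQ A w1 = MQ A w2"
      unfolding MQ_def using run_unique[OF det r1] run_unique[OF det r2] r1 r2 by metis
    with True assms(7) show False by (simp add: test_def)
  next
    case False
    consider "v1 < v2" | "v1 > v2" | "v1 = v2" by linarith
    then show False
    proof cases
      case 1
      have "MQ A (w1 @ shift_first (v2 - v1) e) = MQ A (w2 @ shift_first 0 e)"
        by (rule MQ_sim[OF det r1 r2 _ False]) simp
      with 1 False assms(7) n1 n2 show False by (simp add: test_def Let_def shift_first_0)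
    next
      case 2
      have "MQ A (w1 @ shift_first 0 e) = MQ A (w2 @ shift_first (v1 - v2) e)"
        by (rule MQ_sim[OF det r1 r2 _ False]) simp
      with 2 False assms(7) n1 n2 show False by (simp add: test_def Let_def shift_first_0)
    next
      case 3
      have "MQ A (w1 @ shift_first 0 e) = MQ A (w2 @ shift_first 0 e)"
        by (rule MQ_sim[OF det r1 r2 _ False]) (simp add: 3)
      with 3 False assms(7) n1 n2 show False by (simp add: test_def Let_def shift_first_0)
    qed
  qed
qed

end
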